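(* If $u_\beta$ has affine factor complexity, then $t_m=1$.
   Context: $\beta>1$ is a simple Parry number with $d_\beta(1)=t_1\cdots t_m$, $m\ge2$, nonnegative integer digits, $t_1\ge1$, $t_m\ge1$, satisfying the Parry condition ($t_i\cdots t_m0^\omega$ lexicographically strictly smaller than $t_1\cdots t_m0^\omega$ for $2\le i\le m$). $\varphi$ is the substitution on $\mathcal A=\{0,\dots,m-1\}$ with $\varphi(k)=0^{t_{k+1}}(k+1)$ for $0\le k\le m-2$, $\varphi(m-1)=0^{t_m}$, and $u_\beta=\lim_n\varphi^n(0)$ is its fixed point. Affine factor complexity means that the number $\mathcal C(n)$ of factors of $u_\beta$ of length $n$ equals $an+b$ for all $n\in\mathbb N$, for some constants $a,b$. *)

theory Defs
  imports Complex_Main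
begin

text \<open>Digit strings t = t_1 ... t_m are lists; t ! (i-1) is t_i.
  pad t is the infinite sequence t_1 ... t_m 0^omega (indexed from 0).\<close>

definition pad :: "nat list \<Rightarrow> nat \<Rightarrow> nat" where
  "pad t k = (if k < length t then t ! k else 0)"

definition lex_less :: "(nat \<Rightarrow> nat) \<Rightarrow> (nat \<Rightarrow> nat) \<Rightarrow> bool" where
  "lex_less f g \<longleftrightarrow> (\<exists>k. (\<forall>j<k. f j = g j) \<and> f k < g k)"

definition parry_condition :: "nat list \<Rightarrow> bool" where
  "parry_condition t \<longleftrightarrow> (\<forall>i. 1 \<le> i \<and> i < length t \<longrightarrow> lex_less (pad (drop i t)) (pad t))"

definition beta_map :: "real \<Rightarrow> real \<Rightarrow> real" where
  "beta_map \<beta> x = \<beta> * x - of_int \<lfloor>\<beta> * x\<rfloor>"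

definition renyi_digit :: "real \<Rightarrow> nat \<Rightarrow> int" where
  "renyi_digit \<beta> k = \<lfloor>\<beta> * (beta_map \<beta> ^^ k) 1\<rfloor>"

definition d_beta_one_eq :: "real \<Rightarrow> nat list \<Rightarrow> bool" where
  "d_beta_one_eq \<beta> t \<longleftrightarrow> (\<forall>k. renyi_digit \<beta> k = int (pad t k))"

definition subst_phi :: "nat list \<Rightarrow> nat \<Rightarrow> nat list" where
  "subst_phi t k = (if k + 1 < length t then replicate (t ! k) 0 @ [k + 1]
                    else replicate (t ! (length t - 1)) 0)"

definition subst_word :: "nat list \<Rightarrow> nat list \<Rightarrow> nat list" where
  "subst_word t w = concat (map (subst_phi t) w)"

text \<open>u_beta = lim phi^n(0): the infinite word having every phi^n(0) as a prefix.\<close>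
definition u_beta :: "nat list \<Rightarrow> nat \<Rightarrow> nat" where
  "u_beta t = (SOME u. \<forall>n i. i < length ((subst_word t ^^ n) [0]) \<longrightarrow>
                                u i = (subst_word t ^^ n) [0] ! i)"

definition factors :: "(nat \<Rightarrow> 'a) \<Rightarrow> nat \<Rightarrow> 'a list set" where
  "factors u n = {w. \<exists>i. w = map u [i..<i + n]}"

definition factor_complexity :: "(nat \<Rightarrow> 'a) \<Rightarrow> nat \<Rightarrow> nat" where
  "factor_complexity u n = card (factors u n)"

definition affine_complexity :: "(nat \<Rightarrow> 'a) \<Rightarrow> bool" where
  "affine_complexity u \<longleftrightarrow>
     (\<exists>a b :: real. \<forall>n. real (factor_complexity u n) = a * real n + b)"

end

theory Submission
  imports Defs
begin


definition sw :: "nat list \<Rightarrow> nat \<Rightarrow> nat list" where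
  "sw t n = (subst_word t ^^ n) [0]"

lemma subst_word_append[simp]: "subst_word t (xs @ ys) = subst_word t xs @ subst_word t ys"
  by (simp add: subst_word_def)

lemma subst_word_Cons[simp]: "subst_word t (x # ys) = subst_phi t x @ subst_word t ys"
  by (simp add: subst_word_def)

lemma subst_word_Nil[simp]: "subst_word t [] = []"
  by (simp add: subst_word_def)

lemma sw_0[simp]: "sw t 0 = [0]" by (simp add: sw_def)
lemma sw_Suc: "sw t (Suc n) = subst_word t (sw t n)" by (simp add: sw_def)

lemma phi0: "2 \<le> length t \<Longrightarrow> subst_phi t 0 = replicate (t!0) 0 @ [1]"
  by (simp add: subst_phi_def)

lemma phi_len:
  assumes "2 \<le> length t" "1 \<le> t!0" "1 \<le> last t"
  shows "1 \<le> length (subst_phi t k)"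
proof (cases "k + 1 < length t")
  case True then show ?thesis by (simp add: subst_phi_def)
next
  case False
  have "t \<noteq> []" using assms(1) by auto
  then have "t ! (length t - 1) = last t" by (simp add: last_conv_nth)
  then show ?thesis using False assms by (simp add: subst_phi_def)
qed

lemma subst_word_len:
  assumes "2 \<le> length t" "1 \<le> t!0" "1 \<le> last t"
  shows "length ys \<le> length (subst_word t ys)"
proof (induction ys)
  case Nil then show ?case by simp
next
  case (Cons a ys)
  then show ?case using phi_len[OF assms, of a] by simp
qed

lemma sw_hd:
  assumes "2 \<le> length t" "1 \<le> t!0"
  shows "\<exists>ys. sw t n = 0 # ys"
proof (induction n)
  case 0 then show ?case by simp
next
  case (Suc n)
  then obtain ys where "sw t n = 0 # ys" by blast
  moreover obtain k where "t!0 = Suc k" using assms(2) by (cases "t!0") auto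
  ultimately show ?case using assms by (simp add: sw_Suc phi0)
qed

lemma sw_len:
  assumes "2 \<le> length t" "1 \<le> t!0" "1 \<le> last t"
  shows "n < length (sw t n)"
proof (induction n)
  case 0 then show ?case by simp
next
  case (Suc n)
  obtain ys where ys: "sw t n = 0 # ys" using sw_hd assms by blast
  have "length ys \<le> length (subst_word t ys)" using subst_word_len[OF assms] .
  then show ?case using Suc ys assms by (simp add: sw_Suc phi0)
qed

lemma sw_prefix1:
  assumes "2 \<le> length t" "1 \<le> t!0"
  shows "\<exists>zs. sw t (Suc n) = sw t n @ zs"
proof (induction n)
  case 0
  obtain k where "t!0 = Suc k" using assms(2) by (cases "t!0") auto
  then show ?case using assms by (simp add: sw_Suc phi0)
next
  case (Suc n)
  then obtain zs where "sw t (Suc n) = sw t n @ zs" by blast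
  then have "sw t (Suc (Suc n)) = sw t (Suc n) @ subst_word t zs"
    by (simp add: sw_Suc)
  then show ?case by blast
qed

lemma sw_prefix:
  assumes "2 \<le> length t" "1 \<le> t!0" "n \<le> n'"
  shows "\<exists>zs. sw t n' = sw t n @ zs"
  using assms(3)
proof (induction n' rule: dec_induct)
  case base then show ?case by simp
next
  case (step k)
  then obtain zs where "sw t k = sw t n @ zs" by blast
  moreover obtain zs' where "sw t (Suc k) = sw t k @ zs'" using sw_prefix1 assms by blast
  ultimately show ?case by auto
qed

lemma sw_nth_consistent:
  assumes "2 \<le> length t" "1 \<le> t!0" "i < length (sw t n)" "i < length (sw t n')"
  shows "sw t n ! i = sw t n' ! i"
proof -
  obtain zs where z: "sw t (max n n') = sw t n @ zs"
    using sw_prefix[OF assms(1,2) max.cobounded1] by blast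
  obtain zs' where z': "sw t (max n n') = sw t n' @ zs'"
    using sw_prefix[OF assms(1,2) max.cobounded2] by blast
  have "sw t (max n n') ! i = sw t n ! i" unfolding z using assms(3) by (simp only: nth_append if_True)
  moreover have "sw t (max n n') ! i = sw t n' ! i" unfolding z' using assms(4) by (simp only: nth_append if_True)
  ultimately show ?thesis by simp
qed

lemma u_prop:
  assumes "2 \<le> length t" "1 \<le> t!0" "1 \<le> last t"
  shows "i < length (sw t n) \<Longrightarrow> u_beta t i = sw t n ! i"
proof -
  let ?P = "\<lambda>u. \<forall>n i. i < length ((subst_word t ^^ n) [0]) \<longrightarrow> u i = (subst_word t ^^ n) [0] ! i"
  have "?P (\<lambda>i. sw t i ! i)"
  proof (intro allI impI)
    fix n i assume "i < length ((subst_word t ^^ n) [0])"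
    then have "i < length (sw t n)" by (simp add: sw_def)
    then have "sw t i ! i = sw t n ! i" using sw_nth_consistent[OF assms(1,2) sw_len[OF assms]] by blast
    then show "sw t i ! i = (subst_word t ^^ n) [0] ! i" by (simp add: sw_def)
  qed
  then have "?P (u_beta t)" unfolding u_beta_def by (rule someI[of ?P])
  then show "i < length (sw t n) \<Longrightarrow> u_beta t i = sw t n ! i" by (simp add: sw_def)
qed

definition occ :: "nat list \<Rightarrow> nat list \<Rightarrow> bool" where
  "occ t w \<longleftrightarrow> (\<exists>n xs ys. sw t n = xs @ w @ ys)"

lemma occ_infix: "occ t (xs @ w @ ys) \<Longrightarrow> occ t w"
  unfolding occ_def by (metis append.assoc)

lemma occ_subst: "occ t w \<Longrightarrow> occ t (subst_word t w)"
  unfolding occ_def by (metis sw_Suc subst_word_append)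

lemma occ_factor:
  assumes "2 \<le> length t" "1 \<le> t!0" "1 \<le> last t" "occ t w"
  shows "w \<in> factors (u_beta t) (length w)"
proof -
  obtain n xs ys where e: "sw t n = xs @ w @ ys" using assms(4) occ_def by blast
  have "w = map (u_beta t) [length xs..<length xs + length w]"
  proof (rule nth_equalityI)
    fix k assume "k < length w"
    then show "w ! k = map (u_beta t) [length xs..<length xs + length w] ! k"
      using u_prop[OF assms(1-3), of "length xs + k" n] e by (simp add: nth_append)
  qed simp
  then show ?thesis unfolding factors_def by blast
qed

lemma sw_letters:
  assumes "2 \<le> length t"
  shows "set (sw t n) \<subseteq> {..<length t}"
proof (induction n)
  case 0 then show ?case using assms by (cases t) auto
next
  case (Suc n)
  have "set (subst_phi t k) \<subseteq> {..<length t}" for k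
    using assms by (auto simp: subst_phi_def)
  then show ?case by (auto simp: sw_Suc subst_word_def)
qed

lemma u_letters:
  assumes "2 \<le> length t" "1 \<le> t!0" "1 \<le> last t"
  shows "u_beta t i < length t"
proof -
  have "i < length (sw t i)" using sw_len assms by blast
  then show ?thesis using u_prop[OF assms] sw_letters[OF assms(1), of i] nth_mem by fastforce
qed



lemma parry_last:
  assumes "2 \<le> length t" "parry_condition t"
  shows "last t \<le> t!0"
proof -
  have "1 \<le> length t - 1 \<and> length t - 1 < length t" using assms(1) by auto
  then have "lex_less (pad (drop (length t - 1) t)) (pad t)"
    using assms(2) unfolding parry_condition_def by blast
  then obtain k where k: "\<forall>j<k. pad (drop (length t - 1) t) j = pad t j"
      "pad (drop (length t - 1) t) k < pad t k" unfolding lex_less_def by blast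
  have t0: "t \<noteq> []" using assms by auto
  have d0: "pad (drop (length t - 1) t) 0 = last t"
    using t0 by (simp add: pad_def last_conv_nth)
  have p0: "pad t 0 = t!0" using t0 by (simp add: pad_def)
  show ?thesis
  proof (cases k)
    case 0 then show ?thesis using k d0 p0 by simp
  next
    case (Suc k') then show ?thesis using k(1)[rule_format, of 0] d0 p0 by simp
  qed
qed

lemma occ_00:
  assumes "2 \<le> length t" "2 \<le> t!0"
  shows "occ t [0,0]"
proof -
  obtain k where k: "t!0 = Suc (Suc k)" using assms(2) by (metis add_2_eq_Suc le_Suc_ex)
  have "sw t 1 = [] @ [0,0] @ (replicate k 0 @ [1])"
    using assms(1) k by (simp add: sw_Suc phi0)
  then show ?thesis unfolding occ_def by blast
qed

lemma occ_k0:
  assumes "2 \<le> length t" "2 \<le> t!0"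
  shows "k < length t \<Longrightarrow> occ t [k,0]"
proof (induction k)
  case 0 then show ?case using occ_00 assms by blast
next
  case (Suc k)
  then have "occ t [k,0]" by simp
  then have "occ t (subst_word t [k,0])" by (rule occ_subst)
  moreover obtain j where j: "t!0 = Suc j" using assms(2) by (cases "t!0") auto
  ultimately have "occ t (replicate (t!k) 0 @ [Suc k, 0] @ (replicate j 0 @ [1]))"
    using Suc.prems assms by (simp add: subst_phi_def)
  then show ?case by (rule occ_infix)
qed

lemma occ_c_p:
  assumes "2 \<le> length t" "2 \<le> t!0" "1 \<le> c" "c < length t"
  shows "occ t (c # replicate (t!0) 0 @ [1])"
proof -
  obtain k where kc: "c = Suc k" using assms(3) by (cases c) auto
  have "occ t [k,0]" using occ_k0 assms kc by simp
  then have "occ t (subst_word t [k,0])" by (rule occ_subst)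
  then have "occ t (replicate (t!k) 0 @ (c # replicate (t!0) 0 @ [1]) @ [])"
    using assms kc by (simp add: subst_phi_def)
  then show ?thesis by (rule occ_infix)
qed

lemma occ_last0:
  assumes "2 \<le> length t" "2 \<le> t!0"
  shows "occ t (replicate (last t) 0 @ replicate (t!0) 0 @ [1])"
proof -
  have "occ t [length t - 1,0]" using occ_k0 assms by simp
  then have o: "occ t (subst_word t [length t - 1,0])" by (rule occ_subst)
  have l: "t!(length t - 1) = last t" using assms(1) by (cases t) (auto simp: last_conv_nth)
  have n: "\<not> (length t - 1 + 1 < length t)" by simp
  have p1: "subst_phi t (length t - 1) = replicate (last t) 0" using l n unfolding subst_phi_def by presburger
  have p0: "subst_phi t 0 = replicate (t!0) 0 @ [1]" using assms(1) by (simp add: phi0)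
  show ?thesis using o p1 p0 by simp
qed

lemma occ_0p:
  assumes "2 \<le> length t" "2 \<le> t!0" "1 \<le> last t"
  shows "occ t (0 # replicate (t!0) 0 @ [1])"
proof -
  obtain k where k: "last t = Suc k" using assms(3) by (cases "last t") auto
  have e: "replicate (last t) 0 @ replicate (t!0) 0 @ [1] = replicate k 0 @ (0 # replicate (t!0) 0 @ [1]) @ []"
    using k by (simp add: replicate_app_Cons_same)
  have "occ t (replicate k 0 @ (0 # replicate (t!0) 0 @ [1]) @ [])"
    using occ_last0[OF assms(1,2)] unfolding e .
  then show ?thesis by (rule occ_infix)
qed

lemma occ_zeros:
  assumes "2 \<le> length t" "2 \<le> t!0" "2 \<le> last t"
  shows "occ t (replicate (t!0 + 2) 0)"
proof -
  obtain k where k: "last t = k + 2" using assms(3) by (metis add.commute le_Suc_ex)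
  have "replicate (last t) (0::nat) @ replicate (t!0) 0 @ [1] = replicate (last t + t!0) 0 @ [1]"
    by (simp add: replicate_add)
  also have "\<dots> = replicate (k + (t!0 + 2)) 0 @ [1]" using k by (simp add: algebra_simps)
  also have "\<dots> = replicate k 0 @ replicate (t!0 + 2) 0 @ [1]"
    by (simp only: replicate_add append_assoc)
  finally have e: "replicate (last t) (0::nat) @ replicate (t!0) 0 @ [1] = replicate k 0 @ replicate (t!0 + 2) 0 @ [1]" .
  have "occ t (replicate k 0 @ replicate (t!0 + 2) 0 @ [1])"
    using occ_last0[OF assms(1,2)] unfolding e .
  then show ?thesis by (rule occ_infix)
qed



lemma count_fibers:
  assumes fA: "finite A" and fB: "finite B" and into: "\<forall>v\<in>B. f v \<in> A"
    and onto: "\<forall>w\<in>A. \<exists>v\<in>B. f v = w" and pA: "p\<in>A" and zA: "z\<in>A" and pz: "p\<noteq>z"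
    and gp: "m \<le> card {v\<in>B. f v = p}" and gz: "2 \<le> card {v\<in>B. f v = z}"
  shows "card A + m \<le> card B"
proof -
  define g where "g w = card {v\<in>B. f v = w}" for w
  have Beq: "B = (\<Union>w\<in>A. {v\<in>B. f v = w})" using into by auto
  have cU: "card (\<Union>w\<in>A. {v\<in>B. f v = w}) = (\<Sum>w\<in>A. card {v\<in>B. f v = w})"
  proof (rule card_UN_disjoint)
    show "finite A" by (rule fA)
    show "\<forall>w\<in>A. finite {v \<in> B. f v = w}" using fB by simp
    show "\<forall>i\<in>A. \<forall>j\<in>A. i \<noteq> j \<longrightarrow> {v \<in> B. f v = i} \<inter> {v \<in> B. f v = j} = {}" by blast
  qed
  have cB: "card B = (\<Sum>w\<in>A. g w)"
    unfolding g_def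
  proof -
    have "card B = card (\<Union>w\<in>A. {v\<in>B. f v = w})" by (rule arg_cong[OF Beq])
    then show "card B = (\<Sum>w\<in>A. card {v\<in>B. f v = w})" using cU by (rule trans)
  qed
  have g1: "1 \<le> g w" if wA: "w \<in> A" for w
  proof -
    obtain v where "v\<in>B" "f v = w" using onto wA by blast
    then have "{v\<in>B. f v = w} \<noteq> {}" by blast
    moreover have "finite {v\<in>B. f v = w}" using fB by simp
    ultimately show ?thesis unfolding g_def by (simp add: Suc_le_eq card_gt_0_iff)
  qed
  let ?R = "A - {p} - {z}"
  have s1: "(\<Sum>w\<in>A. g w) = g p + (\<Sum>w\<in>A - {p}. g w)" by (rule sum.remove[OF fA pA])
  have s2: "(\<Sum>w\<in>A - {p}. g w) = g z + (\<Sum>w\<in>?R. g w)" proof -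
    have "finite (A - {p})" "z \<in> A - {p}" using fA zA pz by auto
    then show ?thesis by (rule sum.remove)
  qed
  have s3: "card ?R \<le> (\<Sum>w\<in>?R. g w)"
  proof -
    have "(\<Sum>w\<in>?R. (1::nat)) \<le> (\<Sum>w\<in>?R. g w)"
      by (rule sum_mono) (use g1 in blast)
    then show ?thesis by simp
  qed
  have c1: "card A = Suc (card (A - {p}))" using card_Suc_Diff1[OF fA pA] by simp
  have c2: "card (A - {p}) = Suc (card ?R)"
  proof -
    have "finite (A - {p})" "z \<in> A - {p}" using fA zA pz by auto
    then show ?thesis using card_Suc_Diff1 by metis
  qed
  have "card B = g p + g z + (\<Sum>w\<in>?R. g w)" using cB s1 s2 by simp
  then show ?thesis using s3 c1 c2 gp gz unfolding g_def by linarith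
qed

lemma factors_finite:
  assumes "2 \<le> length t" "1 \<le> t!0" "1 \<le> last t"
  shows "finite (factors (u_beta t) n)"
proof -
  have "factors (u_beta t) n \<subseteq> {w. set w \<subseteq> {..<length t} \<and> length w = n}"
    using u_letters[OF assms] unfolding factors_def by auto
  moreover have "finite {w. set w \<subseteq> {..<length t} \<and> length w = n}"
    by (rule finite_lists_length_eq) simp
  ultimately show ?thesis by (rule finite_subset)
qed

lemma factors_tl:
  "v \<in> factors u (Suc n) \<Longrightarrow> tl v \<in> factors u n"
proof -
  assume "v \<in> factors u (Suc n)"
  then obtain i where "v = map u [i..<i + Suc n]" unfolding factors_def by blast
  then have "tl v = map u [Suc i..<Suc i + n]"
    by (simp add: upt_rec[of i] map_tl)
  then show ?thesis unfolding factors_def by blast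
qed

lemma factors_ext:
  assumes "i \<ge> 1"
  shows "u (i - 1) # map u [i..<i+n] \<in> factors u (Suc n)"
proof -
  obtain k where k: "i = Suc k" using assms by (cases i) auto
  have "u (i - 1) # map u [i..<i+n] = map u [i - 1..<(i - 1) + Suc n]"
    using k by (simp add: upt_rec[of k])
  then show ?thesis unfolding factors_def mem_Collect_eq by (rule exI)
qed

lemma factors_0: "factors u 0 = {[]}"
  unfolding factors_def by auto

lemma factors_1:
  assumes "2 \<le> length t" "1 \<le> t!0" "1 \<le> last t"
  shows "card (factors (u_beta t) 1) \<le> length t"
proof -
  have "factors (u_beta t) 1 \<subseteq> (\<lambda>c. [c]) ` {..<length t}"
    using u_letters[OF assms] unfolding factors_def by auto
  then have "card (factors (u_beta t) 1) \<le> card ((\<lambda>c. [c]) ` {..<length t})"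
    by (rule card_mono[rotated]) simp
  also have "\<dots> \<le> length t" using card_image_le[of "{..<length t}" "\<lambda>c. [c]"] by simp
  finally show ?thesis .
qed



theorem corollary4:
  fixes \<beta> :: real and t :: "nat list"
  assumes "\<beta> > 1"
    and "length t \<ge> 2"
    and "t ! 0 \<ge> 1"
    and "last t \<ge> 1"
    and "parry_condition t"
    and "d_beta_one_eq \<beta> t"
    and "affine_complexity (u_beta t)"
  shows "last t = 1"
proof (rule ccontr)
  assume ne: "last t \<noteq> 1"
  have L: "2 \<le> length t" "1 \<le> t!0" "1 \<le> last t" using assms by auto
  have L2: "2 \<le> last t" using ne assms(4) by simp
  have T2: "2 \<le> t!0" using parry_last[OF assms(2,5)] L2 by simp
  define T where "T = t!0"
  define u where "u = u_beta t"
  define m where "m = length t"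
  define p where "p = replicate T 0 @ [1::nat]"
  define z where "z = replicate (Suc T) (0::nat)"
  have sw1: "sw t 1 = p" using L(1) by (simp add: sw_Suc phi0 p_def T_def)
  have up: "u i = p ! i" if "i < Suc T" for i
    using u_prop[OF L, of i 1] sw1 that unfolding u_def p_def by simp
  have pF: "map u [0..<Suc T] = p"
  proof (rule nth_equalityI)
    show "length (map u [0..<Suc T]) = length p" by (simp add: p_def)
  next
    fix i assume "i < length (map u [0..<Suc T])"
    then have "i < Suc T" by simp
    then show "map u [0..<Suc T] ! i = p ! i" using up by (simp del: upt_Suc)
  qed
  have p_in: "p \<in> factors u (Suc T)"
    unfolding factors_def mem_Collect_eq using pF[symmetric] by (intro exI[of _ 0]) simp
  have cp: "c # p \<in> factors u (Suc (Suc T))" if "c < m" for c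
  proof -
    have "occ t (c # p)"
    proof (cases "c = 0")
      case True then show ?thesis using occ_0p[OF L(1) T2 L(3)] unfolding p_def T_def by simp
    next
      case False then show ?thesis using occ_c_p[OF L(1) T2, of c] that unfolding p_def T_def m_def by simp
    qed
    then show ?thesis using occ_factor[OF L] unfolding u_def p_def by fastforce
  qed
  have zz: "0 # z \<in> factors u (Suc (Suc T))"
  proof -
    have "replicate (t!0 + 2) 0 \<in> factors u (length (replicate (t!0 + 2) (0::nat)))"
      using occ_factor[OF L occ_zeros[OF L(1) T2 L2]] unfolding u_def .
    then show ?thesis unfolding z_def T_def by (simp add: numeral_2_eq_2)
  qed
  have z_in: "z \<in> factors u (Suc T)" using factors_tl[OF zz] by simp
  obtain x where x0: "x \<noteq> 0" and xz: "x # z \<in> factors u (Suc (Suc T))"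
  proof -
    obtain i where zi: "0 # z = map u [i..<i + Suc (Suc T)]" using zz unfolding factors_def mem_Collect_eq by (elim exE) (rule that)
    have zero: "u l = 0" if "i \<le> l" "l < i + Suc (Suc T)" for l
    proof -
      have e: "(0 # z) ! (l - i) = map u [i..<i + Suc (Suc T)] ! (l - i)" using zi by simp
      have a: "map u [i..<i + Suc (Suc T)] ! (l - i) = u l" using that by (simp del: upt_Suc)
      have r: "0 # z = replicate (Suc (Suc T)) 0" by (simp add: z_def)
      have b: "(0 # z) ! (l - i) = 0" unfolding r using that by (simp del: replicate_Suc)
      show ?thesis using e a b by simp
    qed
    have uT: "u T = 1" using up[of T] unfolding p_def by (simp add: nth_append)
    have Ti: "T < i" using zero[of T] uT by (cases "i \<le> T") auto
    define S where "S = {j. j < i \<and> u j \<noteq> 0}"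
    have fS: "finite S" unfolding S_def by simp
    have TS: "T \<in> S" unfolding S_def using Ti uT by simp
    define j where "j = Max S"
    have jS: "j \<in> S" unfolding j_def using fS TS by (intro Max_in) auto
    have jmax: "u l = 0" if "j < l" "l < i" for l
    proof (rule ccontr)
      assume "u l \<noteq> 0"
      then have "l \<in> S" unfolding S_def using that by simp
      then have "l \<le> j" unfolding j_def using fS by simp
      then show False using that by simp
    qed
    have mz: "map u [Suc j..<Suc j + Suc T] = z"
    proof (rule nth_equalityI)
      show "length (map u [Suc j..<Suc j + Suc T]) = length z" unfolding z_def by simp
    next
      fix k assume k0: "k < length (map u [Suc j..<Suc j + Suc T])"
      have k: "k < Suc T" using k0 by (simp del: upt_Suc)
      have ji: "j < i" using jS unfolding S_def by simp
      have "u (Suc j + k) = 0"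
      proof (cases "Suc j + k < i")
        case True then show ?thesis using jmax by simp
      next
        case False
        then have "i \<le> Suc j + k" "Suc j + k < i + Suc (Suc T)" using k ji by auto
        then show ?thesis by (rule zero)
      qed
      then show "map u [Suc j..<Suc j + Suc T] ! k = z ! k" using k unfolding z_def by (simp del: upt_Suc replicate_Suc)
    qed
    have "u j # z \<in> factors u (Suc (Suc T))"
      using factors_ext[of "Suc j" u "Suc T"] mz by simp
    moreover have "u j \<noteq> 0" using jS unfolding S_def by simp
    ultimately show ?thesis using that by blast
  qed
  have fin: "finite (factors u n)" for n using factors_finite[OF L] unfolding u_def .
  have onto: "\<forall>w\<in>factors u (Suc T). \<exists>v\<in>factors u (Suc (Suc T)). tl v = w"
  proof
    fix w assume "w \<in> factors u (Suc T)"
    then obtain i where wi: "w = map u [i..<i + Suc T]" unfolding factors_def by blast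
    show "\<exists>v\<in>factors u (Suc (Suc T)). tl v = w"
    proof (cases "i = 0")
      case True
      then have "w = p" using wi pF by simp
      moreover have "0 # p \<in> factors u (Suc (Suc T))" using cp[of 0] L(1) m_def by (metis le_trans not_less_eq_eq zero_less_Suc numeral_2_eq_2 less_le_trans)
      ultimately show ?thesis by force
    next
      case False
      then show ?thesis using factors_ext[of i u "Suc T"] wi by force
    qed
  qed
  have gp: "m \<le> card {v \<in> factors u (Suc (Suc T)). tl v = p}"
  proof -
    have "(\<lambda>c. c # p) ` {..<m} \<subseteq> {v \<in> factors u (Suc (Suc T)). tl v = p}" using cp by auto
    then have "card ((\<lambda>c. c # p) ` {..<m}) \<le> card {v \<in> factors u (Suc (Suc T)). tl v = p}"
      by (rule card_mono[rotated]) (use fin in simp)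
    moreover have "card ((\<lambda>c. c # p) ` {..<m}) = m" by (subst card_image) (auto simp: inj_on_def)
    ultimately show ?thesis by simp
  qed
  have gz: "2 \<le> card {v \<in> factors u (Suc (Suc T)). tl v = z}"
  proof -
    have "{0 # z, x # z} \<subseteq> {v \<in> factors u (Suc (Suc T)). tl v = z}" using zz xz by auto
    then have "card {0 # z, x # z} \<le> card {v \<in> factors u (Suc (Suc T)). tl v = z}"
      by (rule card_mono[rotated]) (use fin in simp)
    moreover have "card {0 # z, x # z} = 2" using x0 by simp
    ultimately show ?thesis by simp
  qed
  have pz: "p \<noteq> z" unfolding p_def z_def by (simp add: replicate_append_same[symmetric])
  have main: "card (factors u (Suc T)) + m \<le> card (factors u (Suc (Suc T)))"
    by (rule count_fibers[OF fin fin _ onto p_in z_in pz gp gz]) (simp add: factors_tl)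
  obtain a b :: real where ab: "\<forall>n. real (factor_complexity u n) = a * real n + b"
    using assms(7) unfolding affine_complexity_def u_def by blast
  have c0: "factor_complexity u 0 = 1" unfolding factor_complexity_def by (simp add: factors_0)
  have c1: "factor_complexity u 1 \<le> m" unfolding factor_complexity_def u_def m_def using factors_1[OF L] .
  have "real (factor_complexity u (Suc (Suc T))) - real (factor_complexity u (Suc T)) = a"
    using ab[rule_format, of "Suc (Suc T)"] ab[rule_format, of "Suc T"] by (simp add: algebra_simps)
  moreover have "real (factor_complexity u 1) - real (factor_complexity u 0) = a"
    using ab[rule_format, of 1] ab[rule_format, of 0] by simp
  moreover have "real (card (factors u (Suc T))) + real m \<le> real (card (factors u (Suc (Suc T))))"
    using main by linarith
  ultimately show False using c0 c1 unfolding factor_complexity_def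
    by (smt (verit) of_nat_le_iff of_nat_1)
qed

end
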